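(* Let $(Z,Z_{ac},h)$ be a normal accretive operator space and define, for $z\in M_n(Z)$, $\nu_{max}^n(z)=\inf\{h_n(z+p):p\in Z_{ac}^n\}$. Then $\nu_{max}=\{\nu_{max}^n\}$ is a $\mathbb{C}$-proper matrix gauge which induces $(Z,Z_{ac},h)$, i.e. $Z_{ac}^n=\{z:\nu_{max}^n(-z)=0\}$ and $h_n(z)=\max\{\nu_{max}^n(z),\nu_{max}^n(-z)\}$ for all $n$ and $z\in M_n(Z)$.
   Context: For a complex vector space $Z$, $M_n(Z)$ is the $n\times n$ matrices over $Z$. A cone is a set $C$ with $C+C\subseteq C$, $tC\subseteq C$ for $t\ge0$; a matrix cone is a sequence of cones $C_n\subseteq M_n(Z)$ with $X^*C_nX\subseteq C_k$ for scalar $X\in M_{n,k}$; it is $\mathbb{C}$-proper if $C_1\cap-C_1\cap iC_1\cap-iC_1=\{0\}$, making $(Z,Z_{ac})$ an accretive matrix-ordered vector space. A matrix gauge is a sequence $\{\nu_n:M_n(Z)\to[0,\infty)\}$ with $\nu_n(x+y)\le\nu_n(x)+\nu_n(y)$, $\nu_n(tx)=t\nu_n(x)$ ($t\ge0$), $\nu_k(X^*AX)\le\|X\|^2\nu_n(A)$, $\nu_{n+m}(A\oplus B)=\max\{\nu_n(A),\nu_m(B)\}$; it is $\mathbb{C}$-proper if $\nu_1(i^kz)=0$ for $k=0,1,2,3$ implies $z=0$. A hermitian matrix gauge is a $\mathbb{C}$-proper matrix gauge with $h_n(tz)=|t|h_n(z)$ for real $t$. $Z_{ac}$ is $h$-closed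 if $z_k\in Z_{ac}^n$, $h_n(z_k-z)\to0$ imply $z\in Z_{ac}^n$. $(Z,Z_{ac},h)$ is a normal accretive operator space if $(Z,Z_{ac})$ is an accretive matrix-ordered vector space, $h$ is a hermitian matrix gauge, $Z_{ac}$ is $h$-closed, and $y-x,\ z-y\in Z_{ac}^n$ imply $h_n(y)\le\max\{h_n(x),h_n(z)\}$. A matrix gauge $\nu$ induces $(Z,Z_{ac},h)$ if $Z_{ac}^n=\{z:\nu_n(-z)=0\}$ and $h_n(z)=\max\{\nu_n(z),\nu_n(-z)\}$ for all $n,z$. *)

theory Defs
  imports "HOL-Analysis.Analysis"
begin

class cvec = ab_group_add +
  fixes cscale :: "complex \<Rightarrow> 'a \<Rightarrow> 'a" (infixr "\<cdot>\<^sub>C" 75)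
  assumes cscale_add_right: "c \<cdot>\<^sub>C (x + y) = c \<cdot>\<^sub>C x + c \<cdot>\<^sub>C y"
    and cscale_add_left: "(a + b) \<cdot>\<^sub>C x = a \<cdot>\<^sub>C x + b \<cdot>\<^sub>C x"
    and cscale_assoc: "a \<cdot>\<^sub>C (b \<cdot>\<^sub>C x) = (a * b) \<cdot>\<^sub>C x"
    and cscale_one: "1 \<cdot>\<^sub>C x = x"

text \<open>An n x n matrix over Z is represented as a function nat => nat => 'z
  vanishing outside {0..<n} x {0..<n}. Sizes n range over n >= 1.\<close>

type_synonym 'z mat = "nat \<Rightarrow> nat \<Rightarrow> 'z"

definition Mn :: "nat \<Rightarrow> 'z::zero mat set" where
  "Mn n = {A. \<forall>i j. (n \<le> i \<or> n \<le> j) \<longrightarrow> A i j = 0}"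

definition madd :: "'z::plus mat \<Rightarrow> 'z mat \<Rightarrow> 'z mat" where
  "madd A B = (\<lambda>i j. A i j + B i j)"

definition mneg :: "'z::uminus mat \<Rightarrow> 'z mat" where
  "mneg A = (\<lambda>i j. - A i j)"

definition msub :: "'z::minus mat \<Rightarrow> 'z mat \<Rightarrow> 'z mat" where
  "msub A B = (\<lambda>i j. A i j - B i j)"

definition mscaleR :: "real \<Rightarrow> 'z::cvec mat \<Rightarrow> 'z mat" where
  "mscaleR t A = (\<lambda>i j. complex_of_real t \<cdot>\<^sub>C A i j)"

definition mscaleC :: "complex \<Rightarrow> 'z::cvec mat \<Rightarrow> 'z mat" where
  "mscaleC c A = (\<lambda>i j. c \<cdot>\<^sub>C A i j)"

text \<open>X^* A X for a scalar matrix X in M_{n,k}(C) and A in M_n(Z); result in M_k(Z).\<close>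
definition conj_act :: "nat \<Rightarrow> nat \<Rightarrow> complex mat \<Rightarrow> 'z::cvec mat \<Rightarrow> 'z mat" where
  "conj_act n k X A = (\<lambda>i j. if i < k \<and> j < k then
      (\<Sum>p<n. \<Sum>q<n. (cnj (X p i) * X q j) \<cdot>\<^sub>C A p q) else 0)"

definition cmat_norm :: "nat \<Rightarrow> nat \<Rightarrow> complex mat \<Rightarrow> real" where
  "cmat_norm n k X = Sup {sqrt (\<Sum>i<n. (cmod (\<Sum>j<k. X i j * v j))\<^sup>2) | v.
       (\<Sum>j<k. (cmod (v j))\<^sup>2) \<le> 1}"

definition dsum :: "nat \<Rightarrow> nat \<Rightarrow> 'z::zero mat \<Rightarrow> 'z mat \<Rightarrow> 'z mat" where
  "dsum n m A B = (\<lambda>i j. if i < n \<and> j < n then A i j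
      else if n \<le> i \<and> i < n + m \<and> n \<le> j \<and> j < n + m then B (i - n) (j - n) else 0)"

definition is_cone :: "'z::cvec mat set \<Rightarrow> bool" where
  "is_cone C \<longleftrightarrow> (\<forall>x\<in>C. \<forall>y\<in>C. madd x y \<in> C) \<and> (\<forall>t\<ge>0. \<forall>x\<in>C. mscaleR t x \<in> C)"

definition matrix_cone :: "(nat \<Rightarrow> 'z::cvec mat set) \<Rightarrow> bool" where
  "matrix_cone C \<longleftrightarrow>
     (\<forall>n\<ge>1. C n \<subseteq> Mn n \<and> is_cone (C n)) \<and>
     (\<forall>n\<ge>1. \<forall>k\<ge>1. \<forall>X. \<forall>A\<in>C n. conj_act n k X A \<in> C k)"

definition C_proper_cone :: "(nat \<Rightarrow> 'z::cvec mat set) \<Rightarrow> bool" where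
  "C_proper_cone C \<longleftrightarrow>
     C 1 \<inter> mneg ` C 1 \<inter> mscaleC \<i> ` C 1 \<inter> mscaleC (- \<i>) ` C 1 = {\<lambda>i j. 0}"

definition accretive_mo_space :: "(nat \<Rightarrow> 'z::cvec mat set) \<Rightarrow> bool" where
  "accretive_mo_space C \<longleftrightarrow> matrix_cone C \<and> C_proper_cone C"

definition matrix_gauge :: "(nat \<Rightarrow> 'z::cvec mat \<Rightarrow> real) \<Rightarrow> bool" where
  "matrix_gauge \<nu> \<longleftrightarrow>
     (\<forall>n\<ge>1. \<forall>x\<in>Mn n. 0 \<le> \<nu> n x) \<and>
     (\<forall>n\<ge>1. \<forall>x\<in>Mn n. \<forall>y\<in>Mn n. \<nu> n (madd x y) \<le> \<nu> n x + \<nu> n y) \<and>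
     (\<forall>n\<ge>1. \<forall>x\<in>Mn n. \<forall>t\<ge>0. \<nu> n (mscaleR t x) = t * \<nu> n x) \<and>
     (\<forall>n\<ge>1. \<forall>k\<ge>1. \<forall>X. \<forall>A\<in>Mn n.
        \<nu> k (conj_act n k X A) \<le> (cmat_norm n k X)\<^sup>2 * \<nu> n A) \<and>
     (\<forall>n\<ge>1. \<forall>m\<ge>1. \<forall>A\<in>Mn n. \<forall>B\<in>Mn m.
        \<nu> (n + m) (dsum n m A B) = max (\<nu> n A) (\<nu> m B))"

definition C_proper_gauge :: "(nat \<Rightarrow> 'z::cvec mat \<Rightarrow> real) \<Rightarrow> bool" where
  "C_proper_gauge \<nu> \<longleftrightarrow>
     (\<forall>z\<in>Mn 1. (\<forall>k::nat<4. \<nu> 1 (mscaleC (\<i> ^ k) z) = 0) \<longrightarrow> z = (\<lambda>i j. 0))"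

definition hermitian_matrix_gauge :: "(nat \<Rightarrow> 'z::cvec mat \<Rightarrow> real) \<Rightarrow> bool" where
  "hermitian_matrix_gauge h \<longleftrightarrow> matrix_gauge h \<and> C_proper_gauge h \<and>
     (\<forall>n\<ge>1. \<forall>z\<in>Mn n. \<forall>t::real. h n (mscaleR t z) = \<bar>t\<bar> * h n z)"

definition h_closed :: "(nat \<Rightarrow> 'z::cvec mat set) \<Rightarrow> (nat \<Rightarrow> 'z mat \<Rightarrow> real) \<Rightarrow> bool" where
  "h_closed C h \<longleftrightarrow> (\<forall>n\<ge>1. \<forall>zs z. (\<forall>k. zs k \<in> C n) \<and> z \<in> Mn n \<and>
       (\<lambda>k. h n (msub (zs k) z)) \<longlonglongrightarrow> 0 \<longrightarrow> z \<in> C n)"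

definition normal_accretive_operator_space ::
  "(nat \<Rightarrow> 'z::cvec mat set) \<Rightarrow> (nat \<Rightarrow> 'z mat \<Rightarrow> real) \<Rightarrow> bool" where
  "normal_accretive_operator_space C h \<longleftrightarrow>
     accretive_mo_space C \<and> hermitian_matrix_gauge h \<and> h_closed C h \<and>
     (\<forall>n\<ge>1. \<forall>x\<in>Mn n. \<forall>y\<in>Mn n. \<forall>z\<in>Mn n.
        msub y x \<in> C n \<and> msub z y \<in> C n \<longrightarrow> h n y \<le> max (h n x) (h n z))"

definition induces ::
  "(nat \<Rightarrow> 'z::cvec mat \<Rightarrow> real) \<Rightarrow> (nat \<Rightarrow> 'z mat set) \<Rightarrow> (nat \<Rightarrow> 'z mat \<Rightarrow> real) \<Rightarrow> bool" where
  "induces \<nu> C h \<longleftrightarrow> (\<forall>n\<ge>1. C n = {z \<in> Mn n. \<nu> n (mneg z) = 0} \<and>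
       (\<forall>z\<in>Mn n. h n z = max (\<nu> n z) (\<nu> n (mneg z))))"

definition nu_max :: "(nat \<Rightarrow> 'z::cvec mat set) \<Rightarrow> (nat \<Rightarrow> 'z mat \<Rightarrow> real) \<Rightarrow> nat \<Rightarrow> 'z mat \<Rightarrow> real" where
  "nu_max C h n z = Inf {h n (madd z p) | p. p \<in> C n}"

end

theory Submission
  imports Defs
begin


lemma cscale_zero_left[simp]: "(0::complex) \<cdot>\<^sub>C (x::'a::cvec) = 0"
  by (metis add_cancel_right_right add_0 cscale_add_left)

lemma cscale_zero_right[simp]: "c \<cdot>\<^sub>C (0::'a::cvec) = 0"
  by (metis add_cancel_right_right add_0 cscale_add_right)

lemma cscale_minus_one: "(-1::complex) \<cdot>\<^sub>C (x::'a::cvec) = - x"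
proof -
  have "x + (-1::complex) \<cdot>\<^sub>C x = 0"
    by (metis cscale_add_left cscale_one cscale_zero_left add.right_inverse)
  thus ?thesis by (metis add.commute add_diff_cancel_left' diff_0 diff_add_cancel add_right_cancel add.right_inverse)
qed

lemma cscale_sum_right: "c \<cdot>\<^sub>C (\<Sum>a\<in>A. f a) = (\<Sum>a\<in>A. c \<cdot>\<^sub>C (f a::'a::cvec))"
  by (induct A rule: infinite_finite_induct) (simp_all add: cscale_add_right)

lemma cscale_if1[simp]: "(if P then 1 else 0) \<cdot>\<^sub>C (v::'a::cvec) = (if P then v else 0)"
  by (simp add: cscale_one)

lemma dsum2:
  assumes "finite A" "finite B"
  shows "(\<Sum>a\<in>A. \<Sum>b\<in>B. if P \<and> a = i \<and> b = j then f a b else (0::'a::comm_monoid_add))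
     = (if P \<and> i \<in> A \<and> j \<in> B then f i j else 0)"
proof -
  have "(\<Sum>a\<in>A. \<Sum>b\<in>B. if P \<and> a = i \<and> b = j then f a b else (0::'a))
     = (\<Sum>a\<in>A. if P \<and> a = i \<and> j \<in> B then f a j else 0)"
    using assms by (intro sum.cong refl) (auto simp: sum.delta' intro!: sum.neutral)
  also have "\<dots> = (if P \<and> i \<in> A \<and> j \<in> B then f i j else 0)"
    using assms by (auto simp: sum.delta' intro!: sum.neutral)
  finally show ?thesis .
qed

lemma dsum2s:
  assumes "finite A" "finite B"
  shows "(\<Sum>a\<in>A. \<Sum>b\<in>B. if a = i \<and> b = j then f a b else (0::'a::comm_monoid_add))
     = (if i \<in> A \<and> j \<in> B then f i j else 0)"
  using dsum2[OF assms, of True] by (simp only: simp_thms)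

lemma Mn_zero[simp]: "(\<lambda>i j. 0) \<in> Mn n" by (simp add: Mn_def)
lemma Mn_madd: "(x::'z::cvec mat) \<in> Mn n \<Longrightarrow> y \<in> Mn n \<Longrightarrow> madd x y \<in> Mn n"
  by (simp add: Mn_def madd_def)
lemma Mn_mneg: "(x::'z::cvec mat) \<in> Mn n \<Longrightarrow> mneg x \<in> Mn n"
  by (simp add: Mn_def mneg_def)
lemma Mn_msub: "(x::'z::cvec mat) \<in> Mn n \<Longrightarrow> y \<in> Mn n \<Longrightarrow> msub x y \<in> Mn n"
  by (simp add: Mn_def msub_def)
lemma Mn_mscaleR: "x \<in> Mn n \<Longrightarrow> mscaleR t x \<in> Mn n"
  by (simp add: Mn_def mscaleR_def)
lemma Mn_mscaleC: "x \<in> Mn n \<Longrightarrow> mscaleC t x \<in> Mn n"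
  by (simp add: Mn_def mscaleC_def)
lemma Mn_conj: "conj_act n k X A \<in> Mn k"
  by (simp add: Mn_def conj_act_def)
lemma Mn_dsum: "dsum n m A B \<in> Mn (n+m)"
  by (simp add: Mn_def dsum_def)

lemma madd_zero[simp]: "madd (z::'z::cvec mat) (\<lambda>i j. 0) = z" by (simp add: madd_def)
lemma madd_mneg: "madd (mneg (z::'z::cvec mat)) p = msub p z" by (simp add: madd_def mneg_def msub_def fun_eq_iff)
lemma madd_self_neg: "madd (z::'z::cvec mat) (mneg z) = (\<lambda>i j. 0)" by (simp add: madd_def mneg_def)
lemma mscaleR_m1: "mscaleR (-1) z = mneg (z::'z::cvec mat)"
  by (simp add: mscaleR_def mneg_def cscale_minus_one)
lemma mscaleR_0: "mscaleR 0 z = (\<lambda>i j. 0::'z::cvec)"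
  by (simp add: mscaleR_def)
lemma madd_assoc_swap: "madd (madd (x::'z::cvec mat) y) (madd p q) = madd (madd x p) (madd y q)"
  by (simp add: madd_def fun_eq_iff algebra_simps)
lemma mscaleR_madd: "mscaleR t (madd x y) = madd (mscaleR t x) (mscaleR t (y::'z::cvec mat))"
  by (simp add: mscaleR_def madd_def cscale_add_right)
lemma mscaleR_mscaleR: "mscaleR s (mscaleR t x) = mscaleR (s*t) (x::'z::cvec mat)"
  by (simp add: mscaleR_def cscale_assoc)
lemma mscaleR_1: "mscaleR 1 x = (x::'z::cvec mat)"
  by (simp add: mscaleR_def cscale_one)
lemma conj_act_madd: "conj_act n k X (madd (A::'z::cvec mat) B) = madd (conj_act n k X A) (conj_act n k X B)"
  by (simp add: conj_act_def madd_def fun_eq_iff cscale_add_right sum.distrib)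
lemma conj_act_zero: "conj_act n k X (\<lambda>i j. 0::'z::cvec) = (\<lambda>i j. 0)"
  by (simp add: conj_act_def fun_eq_iff)
lemma dsum_madd: "madd (dsum n m (A::'z::cvec mat) B) (dsum n m P Q) = dsum n m (madd A P) (madd B Q)"
  by (simp add: dsum_def madd_def fun_eq_iff)

lemma dsum_conj:
  assumes "p \<in> Mn n" "q \<in> Mn m"
  shows "dsum n m p (q::'z::cvec mat) = madd (conj_act n (n+m) (\<lambda>a j. if j = a then 1 else 0) p)
            (conj_act m (n+m) (\<lambda>a j. if j = a + n then 1 else 0) q)"
proof -
  have e1: "(cnj (if i = a then 1 else 0) * (if j = b then 1 else 0)) \<cdot>\<^sub>C (p a b) =
         (if True \<and> a = i \<and> b = j then p a b else 0)" for i j a b by (auto simp: cscale_one)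
  have e2: "(cnj (if i = a + n then 1 else 0) * (if j = b + n then 1 else 0)) \<cdot>\<^sub>C (q a b) =
         (if (n \<le> i \<and> n \<le> j) \<and> a = i - n \<and> b = j - n then q a b else 0)" for i j a b by (auto simp: cscale_one)
  show ?thesis using assms
    by (auto simp add: dsum_def madd_def conj_act_def fun_eq_iff e1 e2 dsum2 dsum2s Mn_def)
qed

lemma comp1:
  assumes "i < n" "j < n"
  shows "conj_act (n+m) n (\<lambda>a j. if a = j then 1 else 0) M i j = (M i j::'z::cvec)"
proof -
  have e1: "(cnj (if a = i then 1 else 0) * (if b = j then 1 else 0)) \<cdot>\<^sub>C (M a b) =
         (if True \<and> a = i \<and> b = j then M a b else 0)" for a b by (auto simp: cscale_one)
  show ?thesis using assms by (simp add: conj_act_def e1 dsum2s)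
qed

lemma comp2:
  assumes "i < m" "j < m"
  shows "conj_act (n+m) m (\<lambda>a j. if a = j + n then 1 else 0) M i j = (M (i+n) (j+n)::'z::cvec)"
proof -
  have e1: "(cnj (if a = i + n then 1 else 0) * (if b = j + n then 1 else 0)) \<cdot>\<^sub>C (M a b) =
         (if True \<and> a = i + n \<and> b = j + n then M a b else 0)" for a b by (auto simp: cscale_one)
  show ?thesis using assms by (simp add: conj_act_def e1 dsum2s)
qed

lemma cmat_norm_le1:
  assumes "\<And>v. (\<Sum>j<k. (cmod (v j))\<^sup>2) \<le> 1 \<Longrightarrow> (\<Sum>i<N. (cmod (\<Sum>j<k. X i j * v j))\<^sup>2) \<le> 1"
  shows "(cmat_norm N k X)\<^sup>2 \<le> 1"
proof -
  let ?S = "{sqrt (\<Sum>i<N. (cmod (\<Sum>j<k. X i j * v j))\<^sup>2) | v. (\<Sum>j<k. (cmod (v j))\<^sup>2) \<le> 1}"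
  have ub: "x \<le> 1" if "x \<in> ?S" for x using that assms by auto
  have z: "0 \<in> ?S" by (rule CollectI, rule exI[of _ "\<lambda>_. 0"]) simp
  have ne: "?S \<noteq> {}" using z by blast
  have "Sup ?S \<le> 1" by (rule cSup_least[OF ne]) (use ub in blast)
  have bdd: "bdd_above ?S" by (rule bdd_aboveI[where M=1], rule ub)
  moreover have "0 \<le> Sup ?S" by (rule cSup_upper2[OF z]) (simp_all add: bdd)
  ultimately show ?thesis using \<open>Sup ?S \<le> 1\<close> unfolding cmat_norm_def by (simp add: power_le_one)
qed

lemma ifmul: "(if P then 1 else 0) * (x::complex) = (if P then x else 0)" by simp

lemma norm_comp1: "(cmat_norm (n+m) n (\<lambda>a j. if a = j then 1 else 0))\<^sup>2 \<le> 1"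
proof (rule cmat_norm_le1)
  fix v :: "nat \<Rightarrow> complex" assume a: "(\<Sum>j<n. (cmod (v j))\<^sup>2) \<le> 1"
  have "(\<Sum>i<n+m. (cmod (\<Sum>j<n. (if i = j then 1 else 0) * v j))\<^sup>2)
      = (\<Sum>i<n+m. if i < n then (cmod (v i))\<^sup>2 else 0)"
    by (intro sum.cong refl) (simp add: ifmul sum.delta)
  also have "\<dots> = (\<Sum>i<n. (cmod (v i))\<^sup>2)"
    by (simp add: sum.If_cases) (metis Int_absorb1 lessThan_def lessThan_subset_iff le_add1 Collect_cong)
  finally show "(\<Sum>i<n+m. (cmod (\<Sum>j<n. (if i = j then 1 else 0) * v j))\<^sup>2) \<le> 1" using a by simp
qed

lemma norm_comp2: "(cmat_norm (n+m) m (\<lambda>a j. if a = j + n then 1 else 0))\<^sup>2 \<le> 1"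
proof (rule cmat_norm_le1)
  fix v :: "nat \<Rightarrow> complex" assume a: "(\<Sum>j<m. (cmod (v j))\<^sup>2) \<le> 1"
  have "(\<Sum>i<n+m. (cmod (\<Sum>j<m. (if i = j + n then 1 else 0) * v j))\<^sup>2)
      = (\<Sum>i<n+m. if n \<le> i then (cmod (v (i - n)))\<^sup>2 else 0)"
  proof (intro sum.cong refl)
    fix i assume "i \<in> {..<n+m}"
    then have "(\<Sum>j<m. (if i = j + n then 1 else 0) * v j) = (if n \<le> i then v (i - n) else 0)"
    proof (cases "n \<le> i")
      case True
      then have "\<And>j. (i = j + n) = (j = i - n)" by auto
      then show ?thesis using True \<open>i \<in> {..<n+m}\<close> by (simp add: ifmul sum.delta')
    qed (auto simp: ifmul intro!: sum.neutral)
    then show "(cmod (\<Sum>j<m. (if i = j + n then 1 else 0) * v j))\<^sup>2 = (if n \<le> i then (cmod (v (i - n)))\<^sup>2 else 0)"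
      by simp
  qed
  also have "\<dots> = (\<Sum>i\<in>{n..<n+m}. (cmod (v (i - n)))\<^sup>2)"
    by (rule sum.mono_neutral_cong_right) auto
  also have "\<dots> = (\<Sum>j<m. (cmod (v j))\<^sup>2)"
    using sum.shift_bounds_nat_ivl[of "\<lambda>i. (cmod (v (i - n)))\<^sup>2" 0 n m]
    by (simp add: lessThan_atLeast0 add.commute)
  finally show "(\<Sum>i<n+m. (cmod (\<Sum>j<m. (if i = j + n then 1 else 0) * v j))\<^sup>2) \<le> 1" using a by simp
qed



locale naos =
  fixes C :: "nat \<Rightarrow> 'z::cvec mat set" and h :: "nat \<Rightarrow> 'z mat \<Rightarrow> real"
  assumes A: "normal_accretive_operator_space C h"
begin

lemma mc: "matrix_cone C" and pc: "C_proper_cone C" and hg: "hermitian_matrix_gauge h"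
  and hc: "h_closed C h"
  and hn: "\<And>n x y z. n\<ge>1 \<Longrightarrow> x\<in>Mn n \<Longrightarrow> y\<in>Mn n \<Longrightarrow> z\<in>Mn n \<Longrightarrow>
        msub y x \<in> C n \<Longrightarrow> msub z y \<in> C n \<Longrightarrow> h n y \<le> max (h n x) (h n z)"
  using A unfolding normal_accretive_operator_space_def accretive_mo_space_def by auto

lemma C_sub: "n \<ge> 1 \<Longrightarrow> x \<in> C n \<Longrightarrow> x \<in> Mn n"
  using mc unfolding matrix_cone_def by blast
lemma C_add: "n \<ge> 1 \<Longrightarrow> x \<in> C n \<Longrightarrow> y \<in> C n \<Longrightarrow> madd x y \<in> C n"
  using mc unfolding matrix_cone_def is_cone_def by blast
lemma C_scale: "n \<ge> 1 \<Longrightarrow> t \<ge> 0 \<Longrightarrow> x \<in> C n \<Longrightarrow> mscaleR t x \<in> C n"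
  using mc unfolding matrix_cone_def is_cone_def by blast
lemma C_conj: "n \<ge> 1 \<Longrightarrow> k \<ge> 1 \<Longrightarrow> x \<in> C n \<Longrightarrow> conj_act n k X x \<in> C k"
  using mc unfolding matrix_cone_def by blast
lemma C_zero: "n \<ge> 1 \<Longrightarrow> (\<lambda>i j. 0) \<in> C n"
proof -
  assume n: "n \<ge> 1"
  have "(\<lambda>i j. 0) \<in> C 1" using pc unfolding C_proper_cone_def by blast
  from C_conj[OF _ n this, of X] show ?thesis by (simp add: conj_act_zero)
qed

lemma h_nonneg: "n \<ge> 1 \<Longrightarrow> x \<in> Mn n \<Longrightarrow> 0 \<le> h n x"
  using hg unfolding hermitian_matrix_gauge_def matrix_gauge_def by blast
lemma h_add: "n \<ge> 1 \<Longrightarrow> x \<in> Mn n \<Longrightarrow> y \<in> Mn n \<Longrightarrow> h n (madd x y) \<le> h n x + h n y"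
  using hg unfolding hermitian_matrix_gauge_def matrix_gauge_def by blast
lemma h_conj: "n \<ge> 1 \<Longrightarrow> k \<ge> 1 \<Longrightarrow> x \<in> Mn n \<Longrightarrow> h k (conj_act n k X x) \<le> (cmat_norm n k X)\<^sup>2 * h n x"
  using hg unfolding hermitian_matrix_gauge_def matrix_gauge_def by blast
lemma h_dsum: "n \<ge> 1 \<Longrightarrow> m \<ge> 1 \<Longrightarrow> x \<in> Mn n \<Longrightarrow> y \<in> Mn m \<Longrightarrow>
    h (n+m) (dsum n m x y) = max (h n x) (h m y)"
  using hg unfolding hermitian_matrix_gauge_def matrix_gauge_def by blast
lemma h_scale: "n \<ge> 1 \<Longrightarrow> x \<in> Mn n \<Longrightarrow> h n (mscaleR t x) = \<bar>t\<bar> * h n x"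
  using hg unfolding hermitian_matrix_gauge_def by blast
lemma h_neg: "n \<ge> 1 \<Longrightarrow> x \<in> Mn n \<Longrightarrow> h n (mneg x) = h n x"
  using h_scale[of n x "-1"] by (simp add: mscaleR_m1)
lemma h_zero: "n \<ge> 1 \<Longrightarrow> h n (\<lambda>i j. 0) = 0"
  using h_scale[of n "\<lambda>i j. 0" 0] by (simp add: mscaleR_0)

abbreviation "nu \<equiv> nu_max C h"

lemma nu_lower: "n \<ge> 1 \<Longrightarrow> z \<in> Mn n \<Longrightarrow> p \<in> C n \<Longrightarrow> nu n z \<le> h n (madd z p)"
  unfolding nu_max_def
  by (rule cInf_lower) (auto intro!: bdd_belowI[where m=0] h_nonneg Mn_madd simp: C_sub)

lemma nu_greatest: "n \<ge> 1 \<Longrightarrow> (\<And>p. p \<in> C n \<Longrightarrow> c \<le> h n (madd z p)) \<Longrightarrow> c \<le> nu n z"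
  unfolding nu_max_def by (rule cInf_greatest) (use C_zero in blast)+

lemma nu_nonneg: "n \<ge> 1 \<Longrightarrow> z \<in> Mn n \<Longrightarrow> 0 \<le> nu n z"
  by (rule nu_greatest) (auto intro!: h_nonneg Mn_madd simp: C_sub)

lemma nu_le_h: "n \<ge> 1 \<Longrightarrow> z \<in> Mn n \<Longrightarrow> nu n z \<le> h n z"
  using nu_lower[OF _ _ C_zero] by simp

lemma nu_approx: "n \<ge> 1 \<Longrightarrow> e > 0 \<Longrightarrow> \<exists>p\<in>C n. h n (madd z p) < nu n z + e"
proof (rule ccontr)
  assume n: "n \<ge> 1" and e: "e > 0" and "\<not> (\<exists>p\<in>C n. h n (madd z p) < nu n z + e)"
  then have "nu n z + e \<le> nu n z" by (intro nu_greatest) force+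
  with e show False by simp
qed

lemma nu_add:
  assumes n: "n \<ge> 1" and x: "x \<in> Mn n" and y: "y \<in> Mn n"
  shows "nu n (madd x y) \<le> nu n x + nu n y"
proof -
  have key: "nu n (madd x y) \<le> h n (madd x p) + h n (madd y q)" if p: "p \<in> C n" and q: "q \<in> C n" for p q
  proof -
    have "nu n (madd x y) \<le> h n (madd (madd x y) (madd p q))"
      using n by (intro nu_lower) (auto intro: Mn_madd x y C_add p q)
    also have "\<dots> = h n (madd (madd x p) (madd y q))" by (simp add: madd_assoc_swap)
    also have "\<dots> \<le> h n (madd x p) + h n (madd y q)"
      by (rule h_add[OF n]) (auto intro!: Mn_madd simp: x y C_sub[OF n] p q)
    finally show ?thesis .
  qed
  have "nu n (madd x y) - h n (madd y q) \<le> nu n x" if q: "q \<in> C n" for q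
    using key q by (intro nu_greatest n) force
  then have "nu n (madd x y) - nu n x \<le> nu n y"
    by (intro nu_greatest n) force
  then show ?thesis by simp
qed

lemma nu_scale:
  assumes n: "n \<ge> 1" and x: "x \<in> Mn n" and t: "t \<ge> 0"
  shows "nu n (mscaleR t x) = t * nu n x"
proof (cases "t = 0")
  case True
  have "nu n (\<lambda>i j. 0) = 0"
    using nu_le_h[OF n Mn_zero] nu_nonneg[OF n Mn_zero] h_zero[OF n] by simp
  then show ?thesis using True by (simp add: mscaleR_0)
next
  case False
  then have t: "t > 0" using t by simp
  have tx: "mscaleR t x \<in> Mn n" using x by (rule Mn_mscaleR)
  have "nu n (mscaleR t x) / t \<le> nu n x"
  proof (rule nu_greatest[OF n])
    fix p assume p: "p \<in> C n"
    have "nu n (mscaleR t x) \<le> h n (madd (mscaleR t x) (mscaleR t p))"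
      by (rule nu_lower[OF n tx C_scale[OF n _ p]]) (use t in simp)
    also have "\<dots> = t * h n (madd x p)"
      using h_scale[OF n Mn_madd[OF x C_sub[OF n p]], of t] t by (simp add: mscaleR_madd)
    finally show "nu n (mscaleR t x) / t \<le> h n (madd x p)" using t by (simp add: field_simps)
  qed
  moreover have "t * nu n x \<le> nu n (mscaleR t x)"
  proof (rule nu_greatest[OF n])
    fix p assume p: "p \<in> C n"
    have "nu n x \<le> h n (madd x (mscaleR (1/t) p))"
      by (rule nu_lower[OF n x C_scale[OF n _ p]]) (use t in simp)
    also have "madd x (mscaleR (1/t) p) = mscaleR (1/t) (madd (mscaleR t x) p)"
      using t by (simp add: mscaleR_madd mscaleR_mscaleR mscaleR_1)
    also have "h n \<dots> = (1/t) * h n (madd (mscaleR t x) p)"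
      using h_scale[OF n Mn_madd[OF tx C_sub[OF n p]], of "1/t"] t by simp
    finally show "t * nu n x \<le> h n (madd (mscaleR t x) p)" using t by (simp add: field_simps)
  qed
  ultimately show ?thesis using t by (simp add: field_simps)
qed

lemma nu_conj:
  assumes n: "n \<ge> 1" and k: "k \<ge> 1" and a: "a \<in> Mn n"
  shows "nu k (conj_act n k X a) \<le> (cmat_norm n k X)\<^sup>2 * nu n a"
proof -
  let ?c = "(cmat_norm n k X)\<^sup>2"
  have key: "nu k (conj_act n k X a) \<le> ?c * h n (madd a p)" if p: "p \<in> C n" for p
  proof -
    have "nu k (conj_act n k X a) \<le> h k (madd (conj_act n k X a) (conj_act n k X p))"
      by (rule nu_lower[OF k Mn_conj C_conj[OF n k p]])
    also have "\<dots> = h k (conj_act n k X (madd a p))" by (simp add: conj_act_madd)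
    also have "\<dots> \<le> ?c * h n (madd a p)"
      by (rule h_conj[OF n k Mn_madd[OF a C_sub[OF n p]]])
    finally show ?thesis .
  qed
  show ?thesis
  proof (cases "?c = 0")
    case True
    then show ?thesis using key[OF C_zero[OF n]] by simp
  next
    case False
    then have c: "?c > 0" by (simp add: less_le)
    have "nu k (conj_act n k X a) / ?c \<le> nu n a"
      using key c by (intro nu_greatest[OF n]) (simp add: field_simps)
    then show ?thesis using c by (simp add: field_simps)
  qed
qed

lemma nu_dsum:
  assumes n: "n \<ge> 1" and m: "m \<ge> 1" and a: "a \<in> Mn n" and b: "b \<in> Mn m"
  shows "nu (n+m) (dsum n m a b) = max (nu n a) (nu m b)"
proof (rule antisym)
  have nm: "n + m \<ge> 1" using n by simp
  show "nu (n+m) (dsum n m a b) \<le> max (nu n a) (nu m b)"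
  proof (rule field_le_epsilon)
    fix e :: real assume e: "e > 0"
    obtain p where p: "p \<in> C n" "h n (madd a p) < nu n a + e" using nu_approx[OF n e] by blast
    obtain q where q: "q \<in> C m" "h m (madd b q) < nu m b + e" using nu_approx[OF m e] by blast
    have pq: "dsum n m p q \<in> C (n+m)"
      using dsum_conj[OF C_sub[OF n p(1)] C_sub[OF m q(1)]]
      by (simp add: C_add[OF nm] C_conj[OF n nm p(1)] C_conj[OF m nm q(1)])
    have "nu (n+m) (dsum n m a b) \<le> h (n+m) (madd (dsum n m a b) (dsum n m p q))"
      by (rule nu_lower[OF nm Mn_dsum pq])
    also have "\<dots> = max (h n (madd a p)) (h m (madd b q))"
      by (simp add: dsum_madd h_dsum[OF n m Mn_madd[OF a C_sub[OF n p(1)]] Mn_madd[OF b C_sub[OF m q(1)]]])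
    also have "\<dots> \<le> max (nu n a) (nu m b) + e" using p q by linarith
    finally show "nu (n+m) (dsum n m a b) \<le> max (nu n a) (nu m b) + e" .
  qed
  have "nu n a \<le> nu (n+m) (dsum n m a b)"
  proof (rule nu_greatest[OF nm])
    fix P assume P: "P \<in> C (n+m)"
    let ?X = "\<lambda>a j. if a = j then (1::complex) else 0"
    let ?M = "madd (dsum n m a b) P"
    have M: "?M \<in> Mn (n+m)" by (rule Mn_madd[OF Mn_dsum C_sub[OF nm P]])
    have eq: "conj_act (n+m) n ?X ?M = madd a (conj_act (n+m) n ?X P)"
    proof -
      have "conj_act (n+m) n ?X (dsum n m a b) = a"
      proof (intro ext)
        fix i j show "conj_act (n+m) n ?X (dsum n m a b) i j = a i j"
        proof (cases "i < n \<and> j < n")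
          case True then show ?thesis by (simp add: comp1 dsum_def)
        qed (use a in \<open>auto simp: conj_act_def Mn_def\<close>)
      qed
      then show ?thesis by (simp add: conj_act_madd)
    qed
    have "nu n a \<le> h n (madd a (conj_act (n+m) n ?X P))"
      by (rule nu_lower[OF n a C_conj[OF nm n P]])
    also have "\<dots> = h n (conj_act (n+m) n ?X ?M)" by (simp add: eq)
    also have "\<dots> \<le> (cmat_norm (n+m) n ?X)\<^sup>2 * h (n+m) ?M" by (rule h_conj[OF nm n M])
    also have "\<dots> \<le> 1 * h (n+m) ?M"
      by (rule mult_right_mono[OF norm_comp1 h_nonneg[OF nm M]])
    finally show "nu n a \<le> h (n+m) ?M" by simp
  qed
  moreover have "nu m b \<le> nu (n+m) (dsum n m a b)"
  proof (rule nu_greatest[OF nm])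
    fix P assume P: "P \<in> C (n+m)"
    let ?X = "\<lambda>a j. if a = j + n then (1::complex) else 0"
    let ?M = "madd (dsum n m a b) P"
    have M: "?M \<in> Mn (n+m)" by (rule Mn_madd[OF Mn_dsum C_sub[OF nm P]])
    have eq: "conj_act (n+m) m ?X ?M = madd b (conj_act (n+m) m ?X P)"
    proof -
      have "conj_act (n+m) m ?X (dsum n m a b) = b"
      proof (intro ext)
        fix i j show "conj_act (n+m) m ?X (dsum n m a b) i j = b i j"
        proof (cases "i < m \<and> j < m")
          case True then show ?thesis by (simp add: comp2 dsum_def)
        qed (use b in \<open>auto simp: conj_act_def Mn_def\<close>)
      qed
      then show ?thesis by (simp add: conj_act_madd)
    qed
    have "nu m b \<le> h m (madd b (conj_act (n+m) m ?X P))"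
      by (rule nu_lower[OF m b C_conj[OF nm m P]])
    also have "\<dots> = h m (conj_act (n+m) m ?X ?M)" by (simp add: eq)
    also have "\<dots> \<le> (cmat_norm (n+m) m ?X)\<^sup>2 * h (n+m) ?M" by (rule h_conj[OF nm m M])
    also have "\<dots> \<le> 1 * h (n+m) ?M"
      by (rule mult_right_mono[OF norm_comp2 h_nonneg[OF nm M]])
    finally show "nu m b \<le> h (n+m) ?M" by simp
  qed
  ultimately show "max (nu n a) (nu m b) \<le> nu (n+m) (dsum n m a b)" by simp
qed

lemma C_eq:
  assumes n: "n \<ge> 1"
  shows "C n = {z \<in> Mn n. nu n (mneg z) = 0}"
proof (intro set_eqI iffI)
  fix z assume z: "z \<in> C n"
  have zm: "z \<in> Mn n" using C_sub[OF n z] .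
  have "nu n (mneg z) \<le> h n (madd (mneg z) z)" by (rule nu_lower[OF n Mn_mneg[OF zm] z])
  also have "\<dots> = 0" using h_zero[OF n] by (simp add: madd_mneg msub_def)
  finally show "z \<in> {z \<in> Mn n. nu n (mneg z) = 0}"
    using nu_nonneg[OF n Mn_mneg[OF zm]] zm by simp
next
  fix z assume "z \<in> {z \<in> Mn n. nu n (mneg z) = 0}"
  then have zm: "z \<in> Mn n" and z0: "nu n (mneg z) = 0" by auto
  have "\<forall>k. \<exists>p. p \<in> C n \<and> h n (msub p z) < inverse (real (Suc k))"
  proof
    fix k
    obtain p where "p \<in> C n" "h n (madd (mneg z) p) < nu n (mneg z) + inverse (real (Suc k))"
      using nu_approx[OF n, of "inverse (real (Suc k))" "mneg z"] by auto
    then show "\<exists>p. p \<in> C n \<and> h n (msub p z) < inverse (real (Suc k))"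
      using z0 by (auto simp: madd_mneg)
  qed
  then obtain P where P: "\<And>k. P k \<in> C n" "\<And>k. h n (msub (P k) z) < inverse (real (Suc k))"
    by metis
  have "(\<lambda>k. h n (msub (P k) z)) \<longlonglongrightarrow> 0"
  proof (rule Lim_null_comparison[OF _ LIMSEQ_inverse_real_of_nat])
    show "\<forall>\<^sub>F k in sequentially. norm (h n (msub (P k) z)) \<le> inverse (real (Suc k))"
      using P h_nonneg[OF n Mn_msub[OF C_sub[OF n P(1)] zm]]
      by (intro always_eventually allI) (simp add: less_imp_le)
  qed
  then show "z \<in> C n" using hc n P(1) zm unfolding h_closed_def by blast
qed

lemma h_eq:
  assumes n: "n \<ge> 1" and z: "z \<in> Mn n"
  shows "h n z = max (nu n z) (nu n (mneg z))"
proof (rule antisym)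
  show "max (nu n z) (nu n (mneg z)) \<le> h n z"
    using nu_le_h[OF n z] nu_le_h[OF n Mn_mneg[OF z]] h_neg[OF n z] by simp
  show "h n z \<le> max (nu n z) (nu n (mneg z))"
  proof (rule field_le_epsilon)
    fix e :: real assume e: "e > 0"
    obtain p where p: "p \<in> C n" "h n (madd z p) < nu n z + e" using nu_approx[OF n e] by blast
    obtain q where q: "q \<in> C n" "h n (madd (mneg z) q) < nu n (mneg z) + e" using nu_approx[OF n e] by blast
    have pm: "p \<in> Mn n" and qm: "q \<in> Mn n" using C_sub[OF n] p q by auto
    have "h n z \<le> max (h n (msub z q)) (h n (madd z p))"
    proof (rule hn[OF n Mn_msub[OF z qm] z Mn_madd[OF z pm]])
      show "msub z (msub z q) \<in> C n" using q(1) by (simp add: msub_def)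
      show "msub (madd z p) z \<in> C n" using p(1) by (simp add: msub_def madd_def)
    qed
    also have "h n (msub z q) = h n (madd (mneg z) q)"
      using h_neg[OF n Mn_msub[OF z qm]] by (simp add: msub_def mneg_def madd_def)
    also have "max (h n (madd (mneg z) q)) (h n (madd z p)) \<le> max (nu n z) (nu n (mneg z)) + e"
      using p q by linarith
    finally show "h n z \<le> max (nu n z) (nu n (mneg z)) + e" .
  qed
qed

lemma nu_proper: "C_proper_gauge nu"
  unfolding C_proper_gauge_def
proof (intro ballI impI)
  fix z assume z: "z \<in> Mn 1" and k: "\<forall>k::nat<4. nu 1 (mscaleC (\<i> ^ k) z) = 0"
  have one: "(1::nat) \<ge> 1" by simp
  have mem: "w \<in> C 1" if "w \<in> Mn 1" "nu 1 (mneg w) = 0" for w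
    using C_eq[OF one] that by blast
  have e0: "mscaleC (\<i>^0) z = mneg (mneg z)" by (simp add: mscaleC_def mneg_def cscale_one)
  have e1: "mscaleC (\<i>^1) z = mneg (mscaleC (-\<i>) z)"
    by (simp add: mscaleC_def mneg_def fun_eq_iff)
       (metis cscale_minus_one cscale_assoc mult_minus1 minus_minus)
  have e2: "mscaleC (\<i>^2) z = mneg z"
    by (simp add: mscaleC_def mneg_def fun_eq_iff cscale_minus_one)
  have e3: "mscaleC (\<i>^3) z = mneg (mscaleC \<i> z)"
    apply (simp add: mscaleC_def mneg_def fun_eq_iff power3_eq_cube)
    by (metis cscale_minus_one cscale_assoc mult_minus1)
  have k0: "nu 1 (mscaleC (\<i>^0) z) = 0" and k1: "nu 1 (mscaleC (\<i>^1) z) = 0"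
    and k2: "nu 1 (mscaleC (\<i>^2) z) = 0" and k3: "nu 1 (mscaleC (\<i>^3) z) = 0"
    using spec[OF k, of 0] spec[OF k, of 1] spec[OF k, of 2] spec[OF k, of 3]
    by (simp_all only: numeral_less_iff semiring_norm zero_less_numeral one_less_numeral_iff simp_thms)
  have c0: "mneg z \<in> C 1" by (rule mem) (use k0 e0 z Mn_mneg in auto)
  have c1: "mscaleC (-\<i>) z \<in> C 1" by (rule mem) (use k1 e1 z Mn_mscaleC in auto)
  have c2: "z \<in> C 1" by (rule mem) (use k2 e2 z in auto)
  have c3: "mscaleC \<i> z \<in> C 1" by (rule mem) (use k3 e3 z Mn_mscaleC in auto)
  have "z \<in> mneg ` C 1" using c0 by (intro image_eqI[of _ _ "mneg z"]) (auto simp: mneg_def)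
  moreover have "z \<in> mscaleC \<i> ` C 1"
    using c1 by (intro image_eqI[of _ _ "mscaleC (-\<i>) z"]) (auto simp: mscaleC_def cscale_assoc cscale_one)
  moreover have "z \<in> mscaleC (-\<i>) ` C 1"
    using c3 by (intro image_eqI[of _ _ "mscaleC \<i> z"]) (auto simp: mscaleC_def cscale_assoc cscale_one)
  ultimately have "z \<in> C 1 \<inter> mneg ` C 1 \<inter> mscaleC \<i> ` C 1 \<inter> mscaleC (- \<i>) ` C 1"
    using c2 by blast
  then show "z = (\<lambda>i j. 0)" using pc unfolding C_proper_cone_def by blast
qed

end

theorem proposition5p3:
  fixes Zac :: "nat \<Rightarrow> 'z::cvec mat set"
    and h :: "nat \<Rightarrow> 'z mat \<Rightarrow> real"
  assumes "normal_accretive_operator_space Zac h"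
  shows "matrix_gauge (nu_max Zac h) \<and> C_proper_gauge (nu_max Zac h) \<and>
         induces (nu_max Zac h) Zac h"
proof -
  interpret naos Zac h by standard (rule assms)
  have "matrix_gauge (nu_max Zac h)"
    unfolding matrix_gauge_def
    using nu_nonneg nu_add nu_scale nu_conj nu_dsum by auto
  moreover have "induces (nu_max Zac h) Zac h"
    unfolding induces_def using C_eq h_eq by auto
  ultimately show ?thesis using nu_proper by auto
qed

end
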